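(* Let $\Omega$ be finite, $\mathcal P$ the probability functions on $\Omega$, $M$ finite, and $s:\mathcal P\to[-\infty,M]^\Omega$ a proper scoring rule on $\mathcal P$ with $E_p s(p)$ finite for all $p\in\mathcal P$. Let $F=s[\mathcal P]\cap\mathbb R^\Omega$ be the set of finite scores. Suppose that for every convergent sequence $(p_n)$ in $\hat{\mathcal P}$ with $s(p_n)\in F$ for all $n$, we have $\lim_n\langle p_n,s(p_n)\rangle=\langle p,s(p)\rangle$, where $p=\lim_n p_n$. Then $\sigma_F(p)=\langle p,s(p)\rangle$ for all $p\in\hat{\mathcal P}$.
   Context: $\hat{\mathcal P}$ is the set of functions $q:\Omega\to[0,1]$ with $\sum_\omega q(\omega)=1$ (identified with probabilities via $q(\omega)=p(\{\omega\})$), with the Euclidean topology; for $q\in\hat{\mathcal P}$, $s(q)$ means $s$ of the corresponding probability. $\langle f,g\rangle=\sum_\omega f(\omega)\cdot g(\omega)$ for $f\in[0,1]^\Omega$ (or $f\in\mathbb R^\Omega$ when $g$ finite), $g\in[-\infty,\infty)^\Omega$, with the convention $a\cdot0=0\cdot a=0$ for all extended reals $a$; thus $E_p g=\langle\hat p,g\rangle$. $s$ is proper if $E_p s(p)\ge E_p s(q)$ for all probabilities $p,q$. For $F\subseteq\mathbb R^\Omega$ and $v$, $\sigma_F(v)=\sup_{z\in F}\langle v,z\rangle$. *)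

theory Defs
  imports "HOL-Analysis.Analysis" "HOL-Library.Extended_Real"
begin

definition Phat :: "('w::finite \<Rightarrow> real) set" where
  "Phat = {q. (\<forall>w. 0 \<le> q w) \<and> (\<Sum>w\<in>UNIV. q w) = 1}"

(* <f,g> with f real-valued, g extended-real-valued; ereal 0 * (-\<infinity>) = 0 in Isabelle *)
definition einner :: "('w::finite \<Rightarrow> real) \<Rightarrow> ('w \<Rightarrow> ereal) \<Rightarrow> ereal" where
  "einner f g = (\<Sum>w\<in>UNIV. ereal (f w) * g w)"

definition proper :: "(('w::finite \<Rightarrow> real) \<Rightarrow> ('w \<Rightarrow> ereal)) \<Rightarrow> bool" where
  "proper s \<longleftrightarrow> (\<forall>p\<in>Phat. \<forall>q\<in>Phat. einner p (s p) \<ge> einner p (s q))"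

definition finite_scores :: "(('w::finite \<Rightarrow> real) \<Rightarrow> ('w \<Rightarrow> ereal)) \<Rightarrow> ('w \<Rightarrow> real) set" where
  "finite_scores s = {z. \<exists>p\<in>Phat. s p = (\<lambda>w. ereal (z w))}"

definition support_fun :: "('w::finite \<Rightarrow> real) set \<Rightarrow> ('w \<Rightarrow> real) \<Rightarrow> ereal" where
  "support_fun F v = (SUP z\<in>F. ereal (\<Sum>w\<in>UNIV. v w * z w))"

end

theory Submission
  imports Defs "HOL-Real_Asymp.Real_Asymp"
begin

theorem lemma2:
  fixes s :: "('w::finite \<Rightarrow> real) \<Rightarrow> ('w \<Rightarrow> ereal)" and M :: real
  assumes bounded: "\<And>p w. p \<in> Phat \<Longrightarrow> s p w \<le> ereal M"
    and proper_s: "proper s"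
    and fin: "\<And>p. p \<in> Phat \<Longrightarrow> \<bar>einner p (s p)\<bar> \<noteq> \<infinity>"
    and cont: "\<And>ps p. (\<forall>n. ps n \<in> Phat) \<Longrightarrow> (\<forall>n. \<exists>z\<in>finite_scores s. s (ps n) = (\<lambda>w. ereal (z w)))
               \<Longrightarrow> ps \<longlonglongrightarrow> p \<Longrightarrow> (\<lambda>n. einner (ps n) (s (ps n))) \<longlonglongrightarrow> einner p (s p)"
  shows "\<forall>p\<in>Phat. support_fun (finite_scores s) p = einner p (s p)"
proof
  fix p :: "'w \<Rightarrow> real" assume pP: "p \<in> Phat"
  define L where "L = real_of_ereal (einner p (s p))"
  have L: "einner p (s p) = ereal L"
    using fin[OF pP] unfolding L_def by (cases "einner p (s p)") auto
  have up: "support_fun (finite_scores s) p \<le> einner p (s p)"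
    unfolding support_fun_def
  proof (rule SUP_least)
    fix z assume "z \<in> finite_scores s"
    then obtain q where q: "q \<in> Phat" "s q = (\<lambda>w. ereal (z w))" by (auto simp: finite_scores_def)
    have "einner p (s q) = ereal (\<Sum>w\<in>UNIV. p w * z w)" by (simp add: einner_def q(2))
    moreover have "einner p (s q) \<le> einner p (s p)" using proper_s pP q(1) by (auto simp: proper_def)
    ultimately show "ereal (\<Sum>w\<in>UNIV. p w * z w) \<le> einner p (s p)" by simp
  qed
  define u :: "'w \<Rightarrow> real" where "u = (\<lambda>w. 1 / real CARD('w))"
  define t :: "nat \<Rightarrow> real" where "t = (\<lambda>n. 1 / (real n + 2))"
  define ps where "ps = (\<lambda>n w. (1 - t n) * p w + t n * u w)"
  have t0: "0 < t n" for n unfolding t_def by simp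
  have t1: "t n \<le> 1/2" for n unfolding t_def by (simp add: field_simps)
  have upos: "u w > 0" for w unfolding u_def by simp
  have usum: "(\<Sum>w\<in>UNIV. u w) = 1" unfolding u_def by simp
  have pnn: "p w \<ge> 0" for w using pP by (simp add: Phat_def)
  have psum: "(\<Sum>w\<in>UNIV. p w) = 1" using pP by (simp add: Phat_def)
  have pspos: "ps n w > 0" for n w
  proof -
    have "(1 - t n) * p w \<ge> 0" using t1[of n] pnn[of w] by simp
    moreover have "t n * u w > 0" using t0 upos by simp
    ultimately show ?thesis unfolding ps_def by simp
  qed
  have psP: "ps n \<in> Phat" for n
  proof -
    have "(\<Sum>w\<in>UNIV. ps n w) = (1 - t n) * (\<Sum>w\<in>UNIV. p w) + t n * (\<Sum>w\<in>UNIV. u w)"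
      unfolding ps_def by (simp add: sum.distrib sum_distrib_left)
    then show ?thesis using pspos psum usum unfolding Phat_def by (auto intro: less_imp_le)
  qed
  have key: "s q w \<noteq> -\<infinity>" if qP: "q \<in> Phat" and qpos: "\<forall>w. q w > 0" for q w
  proof
    assume m: "s q w = -\<infinity>"
    have e: "einner q (s q) = ereal (q w) * s q w + (\<Sum>v\<in>UNIV-{w}. ereal (q v) * s q v)"
      unfolding einner_def by (simp add: sum.remove)
    have "ereal (q v) * s q v \<noteq> \<infinity>" for v
    proof -
      have "s q v \<le> ereal M" using bounded qP by blast
      moreover have "q v > 0" using qpos by blast
      ultimately show ?thesis by (cases "s q v") auto
    qed
    then have "(\<Sum>v\<in>UNIV-{w}. ereal (q v) * s q v) \<noteq> \<infinity>" by (simp add: sum_Pinfty)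
    moreover have "ereal (q w) * s q w = -\<infinity>" using m qpos[rule_format, of w] by simp
    ultimately have "einner q (s q) = -\<infinity>" using e by (cases "(\<Sum>v\<in>UNIV-{w}. ereal (q v) * s q v)") auto
    then show False using fin[OF qP] by simp
  qed
  define z where "z n = (\<lambda>w. real_of_ereal (s (ps n) w))" for n
  have sz: "s (ps n) = (\<lambda>w. ereal (z n w))" for n
  proof
    fix w
    have "s (ps n) w \<noteq> -\<infinity>" using key[OF psP] pspos by blast
    moreover have "s (ps n) w \<le> ereal M" using bounded psP by blast
    ultimately show "s (ps n) w = ereal (z n w)" unfolding z_def by (cases "s (ps n) w") auto
  qed
  have zF: "z n \<in> finite_scores s" for n unfolding finite_scores_def using psP sz by blast
  have zM: "z n w \<le> M" for n w using bounded[OF psP, of n w] sz[of n] by (metis ereal_less_eq(3))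
  define a where "a n = (\<Sum>w\<in>UNIV. ps n w * z n w)" for n
  define b where "b n = (\<Sum>w\<in>UNIV. p w * z n w)" for n
  define c where "c n = (\<Sum>w\<in>UNIV. u w * z n w)" for n
  have ein: "einner (ps n) (s (ps n)) = ereal (a n)" for n by (simp add: einner_def sz a_def)
  have tlim: "t \<longlonglongrightarrow> 0" unfolding t_def by real_asymp
  have pslim: "ps \<longlonglongrightarrow> p"
  proof -
    have "continuous_on UNIV (\<lambda>x::real. \<lambda>w. (1 - x) * p w + x * u w)"
      by (intro continuous_intros)
    from continuous_on_tendsto_compose[OF this tlim] show ?thesis
      unfolding ps_def by simp
  qed
  have "(\<lambda>n. ereal (a n)) \<longlonglongrightarrow> ereal L"
    using cont[of ps p] psP zF sz pslim ein L by auto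
  then have alim: "a \<longlonglongrightarrow> L" by (simp add: lim_ereal)
  have ineq: "(a n - t n * M) / (1 - t n) \<le> b n" for n
  proof -
    have "a n = (\<Sum>w\<in>UNIV. (1 - t n) * (p w * z n w) + t n * (u w * z n w))"
      unfolding a_def ps_def by (rule sum.cong) (auto simp: algebra_simps)
    also have "\<dots> = (1 - t n) * b n + t n * c n"
      unfolding b_def c_def by (simp add: sum.distrib sum_distrib_left)
    finally have "a n = (1 - t n) * b n + t n * c n" .
    moreover have "c n \<le> M"
    proof -
      have "c n \<le> (\<Sum>w\<in>UNIV. u w * M)" unfolding c_def
        by (rule sum_mono) (simp add: mult_left_mono zM upos less_imp_le)
      also have "\<dots> = M" using usum by (simp add: sum_distrib_right[symmetric])
      finally show ?thesis .
    qed
    ultimately have "a n - t n * M \<le> (1 - t n) * b n" using t0[of n]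
      by (simp add: mult_left_mono)
    moreover have "1 - t n > 0" using t1[of n] by simp
    ultimately show ?thesis by (simp add: pos_divide_le_eq mult.commute)
  qed
  have "(\<lambda>n. (a n - t n * M) / (1 - t n)) \<longlonglongrightarrow> (L - 0 * M) / (1 - 0)"
    by (intro tendsto_intros alim tlim) simp
  then have elim: "(\<lambda>n. ereal ((a n - t n * M) / (1 - t n))) \<longlonglongrightarrow> ereal L" by (simp add: lim_ereal)
  have bnd: "ereal ((a n - t n * M) / (1 - t n)) \<le> support_fun (finite_scores s) p" for n
  proof -
    have "ereal (b n) \<le> support_fun (finite_scores s) p"
      unfolding support_fun_def b_def using zF by (rule SUP_upper)
    then show ?thesis using ineq[of n] by (meson ereal_less_eq(3) order_trans)
  qed
  then have "ereal L \<le> support_fun (finite_scores s) p"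
    using bnd by (intro LIMSEQ_le_const2[OF elim]) blast
  with up L show "support_fun (finite_scores s) p = einner p (s p)" by simp
qed

end
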